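(* Let $G=\mathrm{GL}_2(F)$, let $N$ be the subgroup of upper triangular unipotent matrices, $A$ the subgroup of diagonal matrices and $K_A=A\cap\mathrm{GL}_2(\mathcal{O})$ the group of diagonal matrices with unit entries. Consider the action of $A\times K_A$ on $N\backslash G$ given by $(a,k)\cdot Ng = Nagk^{-1}$. Then a set of representatives for the orbits of this action is given by the cosets of the matrices $$\begin{pmatrix}1&0\\ \varpi^{\gamma}&1\end{pmatrix},\ 0\le \gamma\le\infty,\qquad \begin{pmatrix}0&1\\ 1&\varpi^{\gamma}\end{pmatrix},\ 1\le\gamma\le\infty;$$ that is, every orbit contains exactly one of these cosets.
   Context: $F$ is a non-archimedean local field of characteristic $0$ with ring of integers $\mathcal{O}$, uniformiser $\varpi$ and valuation $v$ with $v(\varpi)=1$. By convention $\varpi^{\infty}=0$. $A$ normalises $N$, so left multiplication by $A$ and right multiplication by $K_A$ give a well-defined two-sided action on $N\backslash G$. *)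

theory Defs
  imports "HOL-Analysis.Analysis" "HOL-Library.Extended_Nat"
begin

text \<open>Discrete valuation on a field, given on nonzero elements by an integer-valued
  function v (with the convention v 0 = infinity, handled by explicit case distinctions).\<close>

definition val_ring :: "('a::field \<Rightarrow> int) \<Rightarrow> 'a set" where
  "val_ring v = {x. x = 0 \<or> v x \<ge> 0}"

definition is_unit_val :: "('a::field \<Rightarrow> int) \<Rightarrow> 'a \<Rightarrow> bool" where
  "is_unit_val v x \<longleftrightarrow> x \<noteq> 0 \<and> v x = 0"

text \<open>Non-archimedean local field (characteristic 0 is imposed through the type class
  field_char_0 in the statement): a field with a normalised discrete valuation v,
  uniformiser p (v p = 1), complete for the valuation, with finite residue field.\<close>

definition nonarch_local_field :: "('a::field \<Rightarrow> int) \<Rightarrow> 'a \<Rightarrow> bool" where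
  "nonarch_local_field v p \<longleftrightarrow>
     (\<forall>x y. x \<noteq> 0 \<longrightarrow> y \<noteq> 0 \<longrightarrow> v (x * y) = v x + v y) \<and>
     (\<forall>x y. x \<noteq> 0 \<longrightarrow> y \<noteq> 0 \<longrightarrow> x + y \<noteq> 0 \<longrightarrow> v (x + y) \<ge> min (v x) (v y)) \<and>
     p \<noteq> 0 \<and> v p = 1 \<and>
     (\<forall>s::nat \<Rightarrow> 'a.
        (\<forall>M::int. \<exists>K. \<forall>m\<ge>K. \<forall>n\<ge>K. s m = s n \<or> v (s m - s n) \<ge> M) \<longrightarrow>
        (\<exists>L. \<forall>M::int. \<exists>K. \<forall>n\<ge>K. s n = L \<or> v (s n - L) \<ge> M)) \<and>
     (\<exists>R. finite R \<and> R \<subseteq> val_ring v \<and>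
        (\<forall>x\<in>val_ring v. \<exists>r\<in>R. x = r \<or> v (x - r) \<ge> 1))"

definition upow :: "'a::field \<Rightarrow> enat \<Rightarrow> 'a" where
  "upow p g = (case g of enat n \<Rightarrow> p ^ n | \<infinity> \<Rightarrow> 0)"

definition mat2 :: "'a::zero \<Rightarrow> 'a \<Rightarrow> 'a \<Rightarrow> 'a \<Rightarrow> 'a^2^2" where
  "mat2 a b c d = (\<chi> i j. if i = 1 then (if j = 1 then a else b) else (if j = 1 then c else d))"

definition GL2 :: "('a::field^2^2) set" where
  "GL2 = {g. invertible g}"

definition Nsub :: "('a::field^2^2) set" where
  "Nsub = {mat2 1 x 0 1 | x. True}"

definition Asub :: "('a::field^2^2) set" where
  "Asub = {mat2 x 0 0 y | x y. x \<noteq> 0 \<and> y \<noteq> 0}"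

definition KAsub :: "('a::field \<Rightarrow> int) \<Rightarrow> ('a^2^2) set" where
  "KAsub v = {mat2 x 0 0 y | x y. is_unit_val v x \<and> is_unit_val v y}"

definition Ncoset :: "'a::field^2^2 \<Rightarrow> ('a^2^2) set" where
  "Ncoset g = (\<lambda>n. n ** g) ` Nsub"

text \<open>Action of (a,k) on a subset S of G: S \<mapsto> a S k^{-1}; on N g this is N a g k^{-1}.\<close>

definition act :: "'a::field^2^2 \<Rightarrow> 'a^2^2 \<Rightarrow> ('a^2^2) set \<Rightarrow> ('a^2^2) set" where
  "act a k S = (\<lambda>x. a ** x ** matrix_inv k) ` S"

definition orbit :: "('a::field \<Rightarrow> int) \<Rightarrow> ('a^2^2) set \<Rightarrow> ('a^2^2) set set" where
  "orbit v C = {act a k C | a k. a \<in> Asub \<and> k \<in> KAsub v}"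

definition rep_cosets :: "'a::field \<Rightarrow> ('a^2^2) set set" where
  "rep_cosets p =
     {Ncoset (mat2 1 0 (upow p g) 1) | g. True} \<union>
     {Ncoset (mat2 0 1 1 (upow p g)) | g. 1 \<le> g}"

end

theory Submission
  imports Defs
begin

lemma mat2_nth[simp]:
  "mat2 a b c d $ 1 $ 1 = a" "mat2 a b c d $ 1 $ 2 = b"
  "mat2 a b c d $ 2 $ 1 = c" "mat2 a b c d $ 2 $ 2 = d"
  by (simp_all add: mat2_def)

lemma mat2_eta: "(M::'a::zero^2^2) = mat2 (M$1$1) (M$1$2) (M$2$1) (M$2$2)"
  unfolding vec_eq_iff forall_2 by simp

lemma mat2_eq_iff: "mat2 a b c d = mat2 a' b' c' d' \<longleftrightarrow> a = a' \<and> b = b' \<and> c = c' \<and> d = d'"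
  by (metis mat2_nth)

lemma mat2_mult: "mat2 a b c d ** mat2 a' b' c' d' =
   mat2 (a*a'+b*c') (a*b'+b*d') (c*a'+d*c') (c*b'+d*d' :: 'a::semiring_1)"
  unfolding vec_eq_iff forall_2 matrix_matrix_mult_def by (simp add: sum_2)

lemma mat2_one: "(mat 1 :: 'a::{zero,one}^2^2) = mat2 1 0 0 1"
  unfolding vec_eq_iff forall_2 by (simp add: mat_def)

lemma matrix_inv_eqI:
  fixes A B :: "'a::field^'n^'n"
  assumes "A ** B = mat 1" "B ** A = mat 1"
  shows "matrix_inv A = B"
proof -
  have "\<exists>A'. A ** A' = mat 1 \<and> A' ** A = mat 1" using assms by blast
  then have h: "A ** matrix_inv A = mat 1 \<and> matrix_inv A ** A = mat 1"
    unfolding matrix_inv_def by (rule someI_ex)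
  have "matrix_inv A = matrix_inv A ** (A ** B)" using assms by simp
  also have "\<dots> = B" using h by (simp add: matrix_mul_assoc)
  finally show ?thesis .
qed

lemma matrix_inv_diag:
  fixes u w :: "'a::field"
  assumes "u \<noteq> 0" "w \<noteq> 0"
  shows "matrix_inv (mat2 u 0 0 w) = mat2 (1/u) 0 0 (1/w)"
  by (rule matrix_inv_eqI) (simp_all add: mat2_mult mat2_one assms)

lemma det_mat2: "det (mat2 a b c d :: 'a::comm_ring_1^2^2) = a*d - b*c"
  by (simp add: det_2)


lemma Ncoset_self: "M \<in> Ncoset M"
  unfolding Ncoset_def Nsub_def by (rule image_eqI[of _ _ "mat2 1 0 0 1"]) (auto simp: mat2_one[symmetric] intro: exI[of _ 0])

lemma Ncoset_mult:
  assumes "n \<in> Nsub" shows "Ncoset (n ** M) = Ncoset M"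
proof -
  obtain y where n: "n = mat2 1 y 0 1" using assms unfolding Nsub_def by auto
  show ?thesis unfolding Ncoset_def
  proof (intro equalityI subsetI)
    fix z assume "z \<in> (\<lambda>m. m ** (n ** M)) ` Nsub"
    then obtain x where z: "z = mat2 1 x 0 1 ** (n ** M)" unfolding Nsub_def by auto
    have "z = mat2 1 (x + y) 0 1 ** M" unfolding z n matrix_mul_assoc by (simp add: mat2_mult add.commute)
    then show "z \<in> (\<lambda>m. m ** M) ` Nsub" unfolding Nsub_def by auto
  next
    fix z assume "z \<in> (\<lambda>m. m ** M) ` Nsub"
    then obtain x where z: "z = mat2 1 x 0 1 ** M" unfolding Nsub_def by auto
    have "z = mat2 1 (x - y) 0 1 ** (n ** M)" unfolding z n matrix_mul_assoc by (simp add: mat2_mult)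
    then show "z \<in> (\<lambda>m. m ** (n ** M)) ` Nsub" unfolding Nsub_def by auto
  qed
qed

lemma act_Ncoset:
  assumes "a \<in> (Asub :: ('a::field^2^2) set)"
  shows "act a k (Ncoset g) = Ncoset (a ** g ** matrix_inv k)"
proof -
  obtain al be where a: "a = mat2 al 0 0 be" "al \<noteq> 0" "be \<noteq> 0" using assms unfolding Asub_def by auto
  show ?thesis unfolding Ncoset_def act_def
  proof (intro equalityI subsetI)
    fix z assume "z \<in> (\<lambda>x. a ** x ** matrix_inv k) ` (\<lambda>n. n ** g) ` Nsub"
    then obtain x where z: "z = a ** (mat2 1 x 0 1 ** g) ** matrix_inv k" unfolding Nsub_def by auto
    have e: "a ** mat2 1 x 0 1 = mat2 1 (al * x / be) 0 1 ** a" using a by (simp add: mat2_mult mult.commute)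
    have "z = mat2 1 (al * x / be) 0 1 ** (a ** g ** matrix_inv k)"
      unfolding z matrix_mul_assoc e ..
    then show "z \<in> (\<lambda>n. n ** (a ** g ** matrix_inv k)) ` Nsub" unfolding Nsub_def by auto
  next
    fix z assume "z \<in> (\<lambda>n. n ** (a ** g ** matrix_inv k)) ` Nsub"
    then obtain x where z: "z = mat2 1 x 0 1 ** (a ** g ** matrix_inv k)" unfolding Nsub_def by auto
    have e: "mat2 1 x 0 1 ** a = a ** mat2 1 (be * x / al) 0 1" using a by (simp add: mat2_mult mult.commute)
    have "z = a ** (mat2 1 (be * x / al) 0 1 ** g) ** matrix_inv k"
      unfolding z matrix_mul_assoc e ..
    then show "z \<in> (\<lambda>x. a ** x ** matrix_inv k) ` (\<lambda>n. n ** g) ` Nsub" unfolding Nsub_def by blast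
  qed
qed


lemma nl_mul: "nonarch_local_field v p \<Longrightarrow> x \<noteq> 0 \<Longrightarrow> y \<noteq> 0 \<Longrightarrow> v (x * y) = v x + v y"
  unfolding nonarch_local_field_def by blast

lemma nl_p: "nonarch_local_field v p \<Longrightarrow> p \<noteq> 0 \<and> v p = 1"
  unfolding nonarch_local_field_def by blast

lemma nl_one: "nonarch_local_field v p \<Longrightarrow> v 1 = 0"
  using nl_mul[of v p 1 1] by simp

lemma nl_inv: "nonarch_local_field v p \<Longrightarrow> x \<noteq> 0 \<Longrightarrow> v (1 / x) = - v x"
  using nl_mul[of v p x "1/x"] nl_one[of v p] by simp

lemma nl_div: "nonarch_local_field v p \<Longrightarrow> x \<noteq> 0 \<Longrightarrow> y \<noteq> 0 \<Longrightarrow> v (x / y) = v x - v y"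
  using nl_mul[of v p x "1/y"] nl_inv[of v p y] by (simp add: divide_inverse)

lemma nl_pow: "nonarch_local_field v p \<Longrightarrow> v (p ^ n) = int n"
proof (induction n)
  case 0 then show ?case using nl_one by simp
next
  case (Suc n) then show ?case using nl_mul[of v p p "p^n"] nl_p[of v p] by simp
qed

lemma upow_zero: "nonarch_local_field v p \<Longrightarrow> upow p g = 0 \<longleftrightarrow> g = \<infinity>"
  using nl_p[of v p] by (cases g) (auto simp: upow_def)

definition rel :: "('a::field \<Rightarrow> int) \<Rightarrow> 'a \<Rightarrow> 'a \<Rightarrow> 'a \<Rightarrow> 'a \<Rightarrow> bool" where
  "rel v c d c' d' \<longleftrightarrow> (\<exists>b u w. b \<noteq> 0 \<and> is_unit_val v u \<and> is_unit_val v w \<and> c' = b * c * u \<and> d' = b * d * w)"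

lemma unit_div: "nonarch_local_field v p \<Longrightarrow> is_unit_val v u \<Longrightarrow> is_unit_val v w \<Longrightarrow> is_unit_val v (u / w)"
  unfolding is_unit_val_def using nl_div[of v p u w] by simp

lemma rel_comb:
  assumes nl: "nonarch_local_field v p" and "rel v c d c1 d1" "rel v c d c2 d2"
  shows "rel v c1 d1 c2 d2"
proof -
  obtain b1 u1 w1 where 1: "b1 \<noteq> 0" "is_unit_val v u1" "is_unit_val v w1" "c1 = b1 * c * u1" "d1 = b1 * d * w1"
    using assms(2) unfolding rel_def by blast
  obtain b2 u2 w2 where 2: "b2 \<noteq> 0" "is_unit_val v u2" "is_unit_val v w2" "c2 = b2 * c * u2" "d2 = b2 * d * w2"
    using assms(3) unfolding rel_def by blast
  have nz: "u1 \<noteq> 0" "w1 \<noteq> 0" using 1 unfolding is_unit_val_def by auto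
  show ?thesis unfolding rel_def
    apply (rule exI[of _ "b2 / b1"], rule exI[of _ "u2 / u1"], rule exI[of _ "w2 / w1"])
    using 1 2 nz unit_div[OF nl] by (auto simp: field_simps)
qed

lemma orbit_rel:
  assumes nl: "nonarch_local_field v p" and "X \<in> orbit v (Ncoset g)" "r \<in> X"
  shows "rel v (g$2$1) (g$2$2) (r$2$1) (r$2$2)"
proof -
  obtain a k where ak: "X = act a k (Ncoset g)" "a \<in> Asub" "k \<in> KAsub v"
    using assms(2) unfolding orbit_def by blast
  obtain al be where a: "a = mat2 al 0 0 be" "al \<noteq> 0" "be \<noteq> 0" using ak(2) unfolding Asub_def by auto
  obtain u w where k: "k = mat2 u 0 0 w" "is_unit_val v u" "is_unit_val v w" using ak(3) unfolding KAsub_def by auto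
  have nz: "u \<noteq> 0" "w \<noteq> 0" using k unfolding is_unit_val_def by auto
  obtain x where r: "r = a ** (mat2 1 x 0 1 ** g) ** matrix_inv k"
    using assms(3) ak(1) unfolding act_def Ncoset_def Nsub_def by auto
  have "r = a ** (mat2 1 x 0 1 ** mat2 (g$1$1) (g$1$2) (g$2$1) (g$2$2)) ** mat2 (1/u) 0 0 (1/w)"
    using r matrix_inv_diag[OF nz] k(1) mat2_eta[of g] by metis
  then have "r$2$1 = be * g$2$1 * (1/u)" "r$2$2 = be * g$2$2 * (1/w)"
    by (simp_all add: a mat2_mult)
  moreover have "is_unit_val v (1/u)" "is_unit_val v (1/w)"
    using unit_div[of v p 1 u] unit_div[of v p 1 w] k nz nl nl_one[OF nl] by (auto simp: is_unit_val_def)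
  ultimately show ?thesis unfolding rel_def using a by blast
qed


lemma core_eq:
  assumes nl: "nonarch_local_field v p" and "is_unit_val v b" "is_unit_val v u"
    and e: "upow p d = b * upow p g * u"
  shows "g = d"
proof (cases g)
  case infinity
  then have "upow p d = 0" using e by (simp add: upow_def)
  then show ?thesis using upow_zero[OF nl] infinity by simp
next
  case (enat n)
  have pn: "p ^ n \<noteq> 0" using nl_p[OF nl] by simp
  have bu: "b \<noteq> 0" "u \<noteq> 0" "v b = 0" "v u = 0" using assms unfolding is_unit_val_def by auto
  have "upow p d \<noteq> 0" using e enat pn bu by (simp add: upow_def)
  then obtain m where m: "d = enat m" using upow_zero[OF nl] by (cases d) auto
  have "v (p ^ m) = v (b * p ^ n * u)" using e m enat by (simp add: upow_def)
  also have "\<dots> = v b + v (p ^ n) + v u" using nl_mul[OF nl] pn bu by simp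
  finally have "int m = int n" using nl_pow[OF nl] bu by simp
  then show ?thesis using m enat by simp
qed

lemma caseA:
  assumes nl: "nonarch_local_field v p" and "rel v (upow p g) 1 (upow p d) 1"
  shows "g = d"
proof -
  obtain b u w where h: "b \<noteq> 0" "is_unit_val v u" "is_unit_val v w" "upow p d = b * upow p g * u" "1 = b * w"
    using assms(2) unfolding rel_def by auto
  have "w \<noteq> 0" using h unfolding is_unit_val_def by auto
  then have "b = 1 / w" using h by (simp add: field_simps)
  then have "is_unit_val v b" using unit_div[OF nl, of 1 w] h nl_one[OF nl] by (simp add: is_unit_val_def)
  then show ?thesis using core_eq[OF nl _ h(2) h(4)] by simp
qed

lemma caseC:
  assumes nl: "nonarch_local_field v p" and "rel v 1 (upow p g) 1 (upow p d)"
  shows "g = d"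
proof -
  obtain b u w where h: "b \<noteq> 0" "is_unit_val v u" "is_unit_val v w" "upow p d = b * upow p g * w" "1 = b * u"
    using assms(2) unfolding rel_def by auto
  have "u \<noteq> 0" using h unfolding is_unit_val_def by auto
  then have "b = 1 / u" using h by (simp add: field_simps)
  then have "is_unit_val v b" using unit_div[OF nl, of 1 u] h nl_one[OF nl] by (simp add: is_unit_val_def)
  then show ?thesis using core_eq[OF nl _ h(3) h(4)] by simp
qed

lemma caseB:
  assumes nl: "nonarch_local_field v p" and "rel v (upow p g) 1 1 (upow p d)" and "1 \<le> d"
  shows False
proof -
  obtain b u w where h: "b \<noteq> 0" "is_unit_val v u" "is_unit_val v w" "1 = b * upow p g * u" "upow p d = b * w"
    using assms(2) unfolding rel_def by auto
  have bu: "u \<noteq> 0" "w \<noteq> 0" "v u = 0" "v w = 0" using h unfolding is_unit_val_def by auto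
  have "upow p g \<noteq> 0" using h(4) by auto
  then obtain n where n: "g = enat n" using upow_zero[OF nl] by (cases g) auto
  have pn: "p ^ n \<noteq> 0" using nl_p[OF nl] by simp
  have "0 = v (b * p ^ n * u)" using h(4) n nl_one[OF nl] by (simp add: upow_def)
  also have "\<dots> = v b + int n + v u" using nl_mul[OF nl] pn bu h(1) nl_pow[OF nl] by simp
  finally have vb: "v b = - int n" using bu by simp
  have "upow p d \<noteq> 0" using h(5) h(1) bu by simp
  then obtain m where m: "d = enat m" using upow_zero[OF nl] by (cases d) auto
  have "int m = v (b * w)" using h(5) m nl_pow[OF nl, of m] by (simp add: upow_def)
  also have "\<dots> = - int n" using nl_mul[OF nl] h(1) bu vb by simp
  finally have "m = 0" by simp
  then show False using assms(3) m by (simp add: one_enat_def)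
qed


lemma rep_cases:
  assumes "C \<in> rep_cosets p"
  obtains g where "C = Ncoset (mat2 1 0 (upow p g) 1)"
  | g where "C = Ncoset (mat2 0 1 1 (upow p g))" "1 \<le> g"
  using assms unfolding rep_cosets_def by blast

lemma uniq:
  assumes nl: "nonarch_local_field v p"
    and A1: "C1 \<in> rep_cosets p" "C1 \<in> orbit v (Ncoset g)"
    and A2: "C2 \<in> rep_cosets p" "C2 \<in> orbit v (Ncoset g)"
  shows "C1 = C2"
proof -
  have R: "rel v (r1$2$1) (r1$2$2) (r2$2$1) (r2$2$2)"
    if "C1 = Ncoset r1" "C2 = Ncoset r2" for r1 r2
    using rel_comb[OF nl orbit_rel[OF nl A1(2), of r1] orbit_rel[OF nl A2(2), of r2]] that Ncoset_self by metis
  have R': "rel v (r2$2$1) (r2$2$2) (r1$2$1) (r1$2$2)"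
    if "C1 = Ncoset r1" "C2 = Ncoset r2" for r1 r2
    using rel_comb[OF nl orbit_rel[OF nl A2(2), of r2] orbit_rel[OF nl A1(2), of r1]] that Ncoset_self by metis
  show ?thesis
  proof (cases rule: rep_cases[OF A1(1)])
    case (1 g1)
    then show ?thesis
    proof (cases rule: rep_cases[OF A2(1)])
      case (1 g2)
      show ?thesis using caseA[OF nl R[OF \<open>C1 = _\<close> 1, simplified]] \<open>C1 = _\<close> 1 by simp
    next
      case (2 g2)
      show ?thesis using caseB[OF nl R[OF \<open>C1 = _\<close> 2(1), simplified] 2(2)] by simp
    qed
  next
    case (2 g1)
    then show ?thesis
    proof (cases rule: rep_cases[OF A2(1)])
      case (1 g2)
      show ?thesis using caseB[OF nl R'[OF \<open>C1 = _\<close> 1, simplified] \<open>1 \<le> g1\<close>] by simp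
    next
      case (2 g2)
      show ?thesis using caseC[OF nl R[OF \<open>C1 = _\<close> 2(1), simplified]] \<open>C1 = _\<close> 2 by simp
    qed
  qed
qed

lemma in_orbit:
  assumes "r = mat2 1 x 0 1 ** (mat2 al 0 0 be ** g ** mat2 s 0 0 t)" "al \<noteq> 0" "be \<noteq> 0"
    "is_unit_val v s" "is_unit_val v t" "nonarch_local_field v p"
  shows "Ncoset r \<in> orbit v (Ncoset g)"
proof -
  have nz: "s \<noteq> 0" "t \<noteq> 0" using assms unfolding is_unit_val_def by auto
  have a: "mat2 al 0 0 be \<in> Asub" using assms unfolding Asub_def by auto
  have "is_unit_val v (1/s)" "is_unit_val v (1/t)"
    using assms unit_div[of v p 1 s] unit_div[of v p 1 t] nl_one[of v p] 
    by (auto simp: is_unit_val_def)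
  then have k: "mat2 (1/s) 0 0 (1/t) \<in> KAsub v" unfolding KAsub_def by blast
  have ki: "matrix_inv (mat2 (1/s) 0 0 (1/t)) = mat2 s 0 0 t" using matrix_inv_diag[of "1/s" "1/t"] nz by simp
  have "act (mat2 al 0 0 be) (mat2 (1/s) 0 0 (1/t)) (Ncoset g) = Ncoset r"
    unfolding act_Ncoset[OF a] ki assms(1) by (rule Ncoset_mult[symmetric]) (auto simp: Nsub_def)
  then show ?thesis using a k unfolding orbit_def by blast
qed


lemma exist:
  assumes nl: "nonarch_local_field v p" and g: "invertible (g :: 'a::field^2^2)"
  shows "\<exists>C. C \<in> rep_cosets p \<and> C \<in> orbit v (Ncoset g)"
proof -
  define A where "A = g$1$1"
  define B where "B = g$1$2"
  define C where "C = g$2$1"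
  define D where "D = g$2$2"
  have gm: "g = mat2 A B C D" unfolding A_def B_def C_def D_def by (rule mat2_eta)
  have dt: "A * D - B * C \<noteq> 0" using g invertible_det_nz[of g] unfolding gm det_mat2 by simp
  have u1: "is_unit_val v 1" using nl_one[OF nl] by (simp add: is_unit_val_def)
  have pnz: "p ^ n \<noteq> 0" for n using nl_p[OF nl] by simp
  consider "C = 0" | "D = 0" | "C \<noteq> 0" "D \<noteq> 0" "v D \<le> v C" | "C \<noteq> 0" "D \<noteq> 0" "v C < v D" by linarith
  then show ?thesis
  proof cases
    case 1
    have AD: "A \<noteq> 0" "D \<noteq> 0" using dt 1 by auto
    have "mat2 1 0 (upow p \<infinity>) 1 = mat2 1 (- (1/A) * B) 0 1 ** (mat2 (1/A) 0 0 (1/D) ** g ** mat2 1 0 0 1)"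
      using AD 1 by (simp add: gm mat2_mult mat2_eq_iff upow_def)
    then have "Ncoset (mat2 1 0 (upow p \<infinity>) 1) \<in> orbit v (Ncoset g)"
      using in_orbit[OF _ _ _ u1 u1 nl] AD by simp
    moreover have "Ncoset (mat2 1 0 (upow p \<infinity>) 1) \<in> rep_cosets p" unfolding rep_cosets_def by blast
    ultimately show ?thesis by blast
  next
    case 2
    have AD: "B \<noteq> 0" "C \<noteq> 0" using dt 2 by auto
    have "mat2 0 1 1 (upow p \<infinity>) = mat2 1 (- (1/B) * A) 0 1 ** (mat2 (1/B) 0 0 (1/C) ** g ** mat2 1 0 0 1)"
      using AD 2 by (simp add: gm mat2_mult mat2_eq_iff upow_def)
    then have "Ncoset (mat2 0 1 1 (upow p \<infinity>)) \<in> orbit v (Ncoset g)"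
      using in_orbit[OF _ _ _ u1 u1 nl] AD by simp
    moreover have "Ncoset (mat2 0 1 1 (upow p \<infinity>)) \<in> rep_cosets p" unfolding rep_cosets_def by force
    ultimately show ?thesis by blast
  next
    case 3
    define n where "n = nat (v C - v D)"
    define s where "s = p ^ n * D / C"
    have "v (p ^ n * D / C) = v (p ^ n * D) - v C" using nl_div[OF nl] pnz 3 by simp
    also have "\<dots> = int n + v D - v C" using nl_mul[OF nl] nl_pow[OF nl] pnz 3 by simp
    finally have vs: "v s = 0" unfolding s_def n_def using 3 by simp
    have snz: "s \<noteq> 0" unfolding s_def using 3 pnz by simp
    define al where "al = D / (s * (A * D - B * C))"
    have alnz: "al \<noteq> 0" unfolding al_def using 3 snz dt by simp
    have "mat2 1 0 (upow p (enat n)) 1 = mat2 1 (- al * B) 0 1 ** (mat2 al 0 0 (1/D) ** g ** mat2 s 0 0 1)"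
      using 3 snz dt unfolding gm al_def apply (simp add: mat2_mult mat2_eq_iff upow_def)
      apply (intro conjI)
      apply (simp add: diff_divide_distrib[symmetric] mult.commute[of D A])
      apply (simp add: s_def)
      done
    then have "Ncoset (mat2 1 0 (upow p (enat n)) 1) \<in> orbit v (Ncoset g)"
      using in_orbit[OF _ alnz _ _ u1 nl] 3 vs snz by (simp add: is_unit_val_def)
    moreover have "Ncoset (mat2 1 0 (upow p (enat n)) 1) \<in> rep_cosets p" unfolding rep_cosets_def by blast
    ultimately show ?thesis by blast
  next
    case 4
    define n where "n = nat (v D - v C)"
    have n1: "1 \<le> enat n" unfolding n_def using 4 by (simp add: one_enat_def)
    define t where "t = p ^ n * C / D"
    have "v (p ^ n * C / D) = v (p ^ n * C) - v D" using nl_div[OF nl] pnz 4 by simp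
    also have "\<dots> = int n + v C - v D" using nl_mul[OF nl] nl_pow[OF nl] pnz 4 by simp
    finally have vt: "v t = 0" unfolding t_def n_def using 4 by simp
    have tnz: "t \<noteq> 0" unfolding t_def using 4 pnz by simp
    define al where "al = - C / (t * (A * D - B * C))"
    have alnz: "al \<noteq> 0" unfolding al_def using 4 tnz dt by simp
    have "mat2 0 1 1 (upow p (enat n)) = mat2 1 (- al * A) 0 1 ** (mat2 al 0 0 (1/C) ** g ** mat2 1 0 0 t)"
      using 4 tnz dt unfolding gm al_def apply (simp add: mat2_mult mat2_eq_iff upow_def)
      apply (intro conjI)
      apply (simp add: diff_divide_distrib[symmetric] mult.commute[of C B])
      apply (simp add: t_def)
      done
    then have "Ncoset (mat2 0 1 1 (upow p (enat n))) \<in> orbit v (Ncoset g)"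
      using in_orbit[OF _ alnz _ u1 _ nl] 4 vt tnz by (simp add: is_unit_val_def)
    moreover have "Ncoset (mat2 0 1 1 (upow p (enat n))) \<in> rep_cosets p" unfolding rep_cosets_def using n1 by blast
    ultimately show ?thesis by blast
  qed
qed

theorem proposition5p1:
  fixes v :: "'a::field_char_0 \<Rightarrow> int" and p :: 'a
  assumes "nonarch_local_field v p"
  shows "\<forall>g\<in>(GL2 :: ('a^2^2) set). \<exists>!C. C \<in> rep_cosets p \<and> C \<in> orbit v (Ncoset g)"
  using exist[OF assms] uniq[OF assms] unfolding GL2_def by blast

end
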